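(* Let $h>0$ be such that the matrix $I_d+\frac{h^2}{2}\nabla^2F(q)M$ is invertible for every $q\in\mathbb{R}^d$, so that the scheme below defines, for each fixed realization of the Wiener increments, a smooth map $(P^h[n],Q^h[n])\mapsto(P^h[n+1],Q^h[n+1])$. Then this one-step map is conformally symplectic: $$dP^h[n+1]\wedge dQ^h[n+1]=e^{-vh}\,dP^h[n]\wedge dQ^h[n],$$ where $dP\wedge dQ=\sum_{i=1}^d dP_i\wedge dQ_i$.
   Context: Let $d\le m$, let $F\in C^\infty(\mathbb{R}^d,\mathbb{R})$ and $f=\nabla F:\mathbb{R}^d\to\mathbb{R}^d$, let $M\in\mathbb{R}^{d\times d}$ be symmetric positive definite, $v>0$, and $\sigma=(\sigma_1,\dots,\sigma_m)\in\mathbb{R}^{d\times m}$ with $\mathrm{rank}\,\sigma=d$. Let $W=(W_1,\dots,W_m)^\top$ be a standard $m$-dimensional Wiener process. For a step size $h>0$, $t_n=nh$ and $\Delta_{n+1}W=W(t_{n+1})-W(t_n)$, the scheme is: given $(P^h[0],Q^h[0])=(p,q)\in\mathbb{R}^{2d}$, $$P^h[n+1]=e^{-vh}P^h[n]-\tfrac{h^2}{2}\nabla^2F(Q^h[n])MP^h[n+1]-h\big(1+\tfrac{vh}{2}\big)e^{-vh}f(Q^h[n])-\big(1+\tfrac{vh}{2}\big)e^{-vh}\sigma\Delta_{n+1}W,$$ $$Q^h[n+1]=Q^h[n]+h\big(1-\tfrac{vh}{2}\big)e^{vh}MP^h[n+1]+\tfrac{h^2}{2}Mf(Q^h[n])+\tfrac{h}{2}M\sigma\Delta_{n+1}W.$$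 (The first equation is linear in $P^h[n+1]$ and is solved for it.) *)

theory Defs
  imports "HOL-Analysis.Analysis"
begin

text \<open>C^infinity for scalar functions on real^'d: there is a family of continuous
functions containing F that is closed under taking all partial derivatives
(so all iterated partial derivatives exist everywhere and are continuous).\<close>
definition smooth_fun :: "(real^'d \<Rightarrow> real) \<Rightarrow> bool" where
  "smooth_fun F \<longleftrightarrow> (\<exists>S. F \<in> S \<and>
     (\<forall>g\<in>S. continuous_on UNIV g \<and>
        (\<forall>i. \<exists>g'\<in>S. \<forall>x. ((\<lambda>t. g (x + t *\<^sub>R axis i 1)) has_real_derivative g' x) (at 0))))"

text \<open>The one-step map of the scheme for a fixed Wiener increment xi = Delta_{n+1} W.
Hess q is the Hessian of F at q, f = grad F.\<close>
definition step_P ::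
  "real \<Rightarrow> real \<Rightarrow> real^'d^'d \<Rightarrow> (real^'d \<Rightarrow> real^'d^'d) \<Rightarrow> (real^'d \<Rightarrow> real^'d)
   \<Rightarrow> real^'m^'d \<Rightarrow> real^'m \<Rightarrow> (real^'d) \<times> (real^'d) \<Rightarrow> real^'d" where
  "step_P h v M Hess f \<sigma> \<xi> pq =
     (let p = fst pq; q = snd pq in
      matrix_inv (mat 1 + (h^2/2) *\<^sub>R (Hess q ** M)) *v
        (exp (-v * h) *\<^sub>R p - (h * (1 + v * h/2) * exp (-v * h)) *\<^sub>R f q
         - ((1 + v * h/2) * exp (-v * h)) *\<^sub>R (\<sigma> *v \<xi>)))"

definition step ::
  "real \<Rightarrow> real \<Rightarrow> real^'d^'d \<Rightarrow> (real^'d \<Rightarrow> real^'d^'d) \<Rightarrow> (real^'d \<Rightarrow> real^'d)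
   \<Rightarrow> real^'m^'d \<Rightarrow> real^'m \<Rightarrow> (real^'d) \<times> (real^'d) \<Rightarrow> (real^'d) \<times> (real^'d)" where
  "step h v M Hess f \<sigma> \<xi> pq =
     (let q = snd pq; P1 = step_P h v M Hess f \<sigma> \<xi> pq in
      (P1, q + (h * (1 - v * h/2) * exp (v * h)) *\<^sub>R (M *v P1) + (h^2/2) *\<^sub>R (M *v f q)
           + (h/2) *\<^sub>R (M *v (\<sigma> *v \<xi>))))"

definition dPdQ :: "(real^'d) \<times> (real^'d) \<Rightarrow> (real^'d) \<times> (real^'d) \<Rightarrow> real" where
  "dPdQ u w = fst u \<bullet> snd w - fst w \<bullet> snd u"

end

theory Submission
  imports Defs
begin

lemma sym_aux:
  fixes g :: "'a::real_inner \<Rightarrow> real" and G :: "'a \<Rightarrow> 'a"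
  assumes g: "\<And>y. (g has_derivative (\<lambda>u. G y \<bullet> u)) (at y)"
    and G: "(G has_derivative D) (at x)"
    and e: "e > 0"
  shows "\<exists>\<delta>>0. \<forall>t. 0<t \<and> t<\<delta> \<longrightarrow>
     \<bar>g (x + t *\<^sub>R a + t *\<^sub>R b) - g (x + t *\<^sub>R a) - g (x + t *\<^sub>R b) + g x - t^2 * (D b \<bullet> a)\<bar>
       \<le> e * t^2 * ((2*norm a + norm b) * norm a)"
proof -
  interpret D: bounded_linear D using G by (rule has_derivative_bounded_linear)
  obtain d where d: "d > 0" "\<And>y. norm (y - x) < d \<Longrightarrow> norm (G y - G x - D (y - x)) \<le> e * norm (y - x)"
    using G e unfolding has_derivative_at_alt by blast
  define \<delta> where "\<delta> = d / (norm a + norm b + 1)"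
  have \<delta>: "\<delta> > 0" unfolding \<delta>_def using d by (intro divide_pos_pos) (auto intro: add_nonneg_pos)
  show ?thesis
  proof (intro exI[of _ \<delta>] conjI allI impI)
    show "\<delta> > 0" by fact
    fix t :: real assume t: "0 < t \<and> t < \<delta>"
    define \<phi> where "\<phi> s = g (x + s *\<^sub>R a + t *\<^sub>R b) - g (x + s *\<^sub>R a)" for s
    define \<phi>' where "\<phi>' s = (G (x + s *\<^sub>R a + t *\<^sub>R b) - G (x + s *\<^sub>R a)) \<bullet> a" for s
    have der: "DERIV \<phi> s :> \<phi>' s" for s
    proof -
      have 1: "((\<lambda>s. x + s *\<^sub>R a + t *\<^sub>R b) has_derivative (\<lambda>h. h *\<^sub>R a)) (at s)"
        by (auto intro!: derivative_eq_intros)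
      have 2: "((\<lambda>s. x + s *\<^sub>R a) has_derivative (\<lambda>h. h *\<^sub>R a)) (at s)"
        by (auto intro!: derivative_eq_intros)
      have "(\<phi> has_derivative (\<lambda>h. G (x + s *\<^sub>R a + t *\<^sub>R b) \<bullet> (h *\<^sub>R a) - G (x + s *\<^sub>R a) \<bullet> (h *\<^sub>R a))) (at s)"
        unfolding \<phi>_def
        by (intro has_derivative_diff has_derivative_compose[OF 1 g, unfolded o_def]
               has_derivative_compose[OF 2 g, unfolded o_def])
      then show ?thesis unfolding has_field_derivative_def \<phi>'_def
        by (rule has_derivative_eq_rhs) (auto simp: algebra_simps inner_diff_left)
    qed
    obtain \<theta> where \<theta>: "0 < \<theta>" "\<theta> < t" "\<phi> t - \<phi> 0 = (t - 0) * \<phi>' \<theta>"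
      using MVT2[of 0 t \<phi> \<phi>'] t der by blast
    define y1 where "y1 = x + \<theta> *\<^sub>R a + t *\<^sub>R b"
    define y2 where "y2 = x + \<theta> *\<^sub>R a"
    have n1: "norm (y1 - x) \<le> t * (norm a + norm b)"
    proof -
      have "norm (y1 - x) \<le> norm (\<theta> *\<^sub>R a) + norm (t *\<^sub>R b)" unfolding y1_def
        by (metis add_diff_cancel_left' norm_triangle_ineq add.assoc)
      also have "\<dots> \<le> t * norm a + t * norm b" using \<theta>
        by (intro add_mono) (auto intro: mult_right_mono)
      finally show ?thesis by (simp add: algebra_simps)
    qed
    have n2: "norm (y2 - x) \<le> t * norm a"
      using \<theta> by (auto simp: y2_def intro: mult_right_mono)
    have tl: "t * (norm a + norm b) < d"
    proof -
      have "t * (norm a + norm b) \<le> t * (norm a + norm b + 1)" using t by auto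
      also have "\<dots> < \<delta> * (norm a + norm b + 1)" using t
        by (intro mult_strict_right_mono) (auto intro: add_nonneg_pos)
      also have "\<dots> = d" unfolding \<delta>_def by (smt (verit) norm_ge_zero nonzero_eq_divide_eq)
      finally show ?thesis .
    qed
    have r1: "norm (G y1 - G x - D (y1 - x)) \<le> e * (t * (norm a + norm b))"
      using d(2)[of y1] n1 tl e by (smt (verit) mult_left_mono)
    have r2: "norm (G y2 - G x - D (y2 - x)) \<le> e * (t * norm a)"
      using d(2)[of y2] n2 tl e t
      by (smt (verit) mult_left_mono norm_ge_zero mult_nonneg_nonneg)
    have dy: "D (y1 - x) - D (y2 - x) = t *\<^sub>R D b"
      by (simp add: y1_def y2_def D.scaleR D.add)
    have "G y1 - G y2 = t *\<^sub>R D b + ((G y1 - G x - D (y1 - x)) - (G y2 - G x - D (y2 - x)))"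
      using dy by (simp add: algebra_simps)
    then have eq: "\<phi>' \<theta> = t * (D b \<bullet> a) + ((G y1 - G x - D (y1 - x)) - (G y2 - G x - D (y2 - x))) \<bullet> a"
    proof -
      have "\<phi>' \<theta> = (G y1 - G y2) \<bullet> a" by (simp add: \<phi>'_def y1_def y2_def)
      then show ?thesis unfolding \<open>G y1 - G y2 = _\<close> by (simp only: inner_add_left inner_scaleR_left)
    qed
    have "\<bar>((G y1 - G x - D (y1 - x)) - (G y2 - G x - D (y2 - x))) \<bullet> a\<bar>
        \<le> norm ((G y1 - G x - D (y1 - x)) - (G y2 - G x - D (y2 - x))) * norm a"
      by (rule Cauchy_Schwarz_ineq2)
    also have "\<dots> \<le> (e * (t * (norm a + norm b)) + e * (t * norm a)) * norm a"
      by (intro mult_right_mono order.trans[OF norm_triangle_ineq4] add_mono r1 r2) auto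
    finally have R: "\<bar>((G y1 - G x - D (y1 - x)) - (G y2 - G x - D (y2 - x))) \<bullet> a\<bar>
        \<le> e * t * ((2*norm a + norm b) * norm a)" by (simp add: algebra_simps)
    have "g (x + t *\<^sub>R a + t *\<^sub>R b) - g (x + t *\<^sub>R a) - g (x + t *\<^sub>R b) + g x - t^2 * (D b \<bullet> a)
       = t * (((G y1 - G x - D (y1 - x)) - (G y2 - G x - D (y2 - x))) \<bullet> a)"
      using \<theta>(3) eq by (simp add: \<phi>_def power2_eq_square algebra_simps)
    also have "\<bar>\<dots>\<bar> \<le> t * (e * t * ((2*norm a + norm b) * norm a))"
      using R t by (simp add: abs_mult)
    finally show "\<bar>g (x + t *\<^sub>R a + t *\<^sub>R b) - g (x + t *\<^sub>R a) - g (x + t *\<^sub>R b) + g x - t^2 * (D b \<bullet> a)\<bar>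
       \<le> e * t^2 * ((2*norm a + norm b) * norm a)" by (simp add: power2_eq_square algebra_simps)
  qed
qed

lemma deriv_sym:
  fixes g :: "'a::real_inner \<Rightarrow> real" and G :: "'a \<Rightarrow> 'a"
  assumes g: "\<And>y. (g has_derivative (\<lambda>u. G y \<bullet> u)) (at y)"
    and G: "(G has_derivative D) (at x)"
  shows "D a \<bullet> b = D b \<bullet> a"
proof -
  define K where "K = (2*norm a + norm b) * norm a + (2*norm b + norm a) * norm b + 1"
  have K: "K > 0" unfolding K_def by (intro add_nonneg_pos) auto
  have main: "\<bar>D b \<bullet> a - D a \<bullet> b\<bar> \<le> e * K" if e: "e > 0" for e
  proof -
    obtain d1 where d1: "d1 > 0" "\<And>t. 0<t \<and> t<d1 \<Longrightarrow>
     \<bar>g (x + t *\<^sub>R a + t *\<^sub>R b) - g (x + t *\<^sub>R a) - g (x + t *\<^sub>R b) + g x - t^2 * (D b \<bullet> a)\<bar>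
       \<le> e * t^2 * ((2*norm a + norm b) * norm a)"
      using sym_aux[OF g G e, of a b] by blast
    obtain d2 where d2: "d2 > 0" "\<And>t. 0<t \<and> t<d2 \<Longrightarrow>
     \<bar>g (x + t *\<^sub>R b + t *\<^sub>R a) - g (x + t *\<^sub>R b) - g (x + t *\<^sub>R a) + g x - t^2 * (D a \<bullet> b)\<bar>
       \<le> e * t^2 * ((2*norm b + norm a) * norm b)"
      using sym_aux[OF g G e, of b a] by blast
    define t where "t = min d1 d2 / 2"
    have t: "0 < t" "t < d1" "t < d2" using d1 d2 by (auto simp: t_def)
    have eqx: "x + t *\<^sub>R b + t *\<^sub>R a = x + t *\<^sub>R a + t *\<^sub>R b" by (simp add: algebra_simps)
    have "\<bar>t^2 * (D b \<bullet> a) - t^2 * (D a \<bullet> b)\<bar> \<le> e * t^2 * ((2*norm a + norm b) * norm a) + e * t^2 * ((2*norm b + norm a) * norm b)"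
      using d1(2)[of t] d2(2)[of t] t unfolding eqx by linarith
    also have "\<dots> \<le> t^2 * (e * K)" using e t unfolding K_def by (simp add: algebra_simps)
    finally have "t^2 * \<bar>D b \<bullet> a - D a \<bullet> b\<bar> \<le> t^2 * (e * K)"
      by (simp add: abs_mult flip: right_diff_distrib)
    then show ?thesis using t by simp
  qed
  show ?thesis
  proof (rule ccontr)
    assume "D a \<bullet> b \<noteq> D b \<bullet> a"
    then have p: "\<bar>D b \<bullet> a - D a \<bullet> b\<bar> > 0" by simp
    have "\<bar>D b \<bullet> a - D a \<bullet> b\<bar> \<le> (\<bar>D b \<bullet> a - D a \<bullet> b\<bar> / (2*K)) * K"
      using main[of "\<bar>D b \<bullet> a - D a \<bullet> b\<bar> / (2*K)"] p K by simp
    then show False using p K by (simp add: field_simps)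
  qed
qed

lemma mvt_any:
  fixes \<psi> :: "real \<Rightarrow> real"
  assumes "\<And>\<tau>. DERIV \<psi> \<tau> :> \<psi>' \<tau>"
  shows "\<exists>\<theta>. \<bar>\<theta>\<bar> \<le> \<bar>s\<bar> \<and> \<psi> s - \<psi> 0 = s * \<psi>' \<theta>"
proof (cases s "0::real" rule: linorder_cases)
  case less
  then obtain z where "s < z" "z < 0" "\<psi> 0 - \<psi> s = (0 - s) * \<psi>' z"
    using MVT2[of s 0 \<psi> \<psi>'] assms by blast
  then show ?thesis by (intro exI[of _ z]) (auto simp: algebra_simps)
next
  case equal then show ?thesis by auto
next
  case greater
  then obtain z where "0 < z" "z < s" "\<psi> s - \<psi> 0 = (s - 0) * \<psi>' z"
    using MVT2[of 0 s \<psi> \<psi>'] assms by blast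
  then show ?thesis by (intro exI[of _ z]) auto
qed

lemma cp:
  fixes g :: "real^'d \<Rightarrow> real"
  assumes d: "\<And>i y. ((\<lambda>t. g (y + t *\<^sub>R axis i (1::real))) has_real_derivative dg i y) (at 0)"
    and c: "\<And>i. continuous_on UNIV (dg i)"
  shows "(g has_derivative (\<lambda>u. \<Sum>i\<in>UNIV. u$i * dg i x)) (at x)"
  unfolding has_derivative_at_alt
proof (intro conjI allI impI)
  show "bounded_linear (\<lambda>u. \<Sum>i\<in>UNIV. u$i * dg i x)"
    by (intro bounded_linear_sum bounded_linear_mult_left[THEN bounded_linear_compose] bounded_linear_vec_nth)
  fix e :: real assume e: "e > 0"
  define n where "n = CARD('d)"
  have n: "n > 0" by (simp add: n_def)
  define e' where "e' = e / (real n + 1)"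
  have e': "e' > 0" using e by (simp add: e'_def)
  have "\<forall>\<^sub>F y in nhds x. \<forall>i. dist (dg i y) (dg i x) < e'"
    using c e' by (intro eventually_all_finite)
      (metis continuous_on_def UNIV_I at_within_open open_UNIV tendsto_iff tendsto_at_iff_tendsto_nhds)
  then obtain \<delta> where \<delta>: "\<delta> > 0" "\<And>y i. dist y x < \<delta> \<Longrightarrow> \<bar>dg i y - dg i x\<bar> < e'"
    unfolding eventually_nhds_metric by (auto simp: dist_real_def)
  obtain ix where ix: "bij_betw ix {0..<n} (UNIV::'d set)"
    using ex_bij_betw_nat_finite[of "UNIV::'d set"] by (auto simp: n_def)
  show "\<exists>d>0. \<forall>y. norm (y - x) < d \<longrightarrow>
        norm (g y - g x - (\<Sum>i\<in>UNIV. (y - x) $ i * dg i x)) \<le> e * norm (y - x)"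
  proof (intro exI[of _ "\<delta> / (real n + 1)"] conjI allI impI)
    show "\<delta> / (real n + 1) > 0" using \<delta> by simp
    fix y assume y: "norm (y - x) < \<delta> / (real n + 1)"
    define u where "u = y - x"
    have nu: "(real n + 1) * norm u < \<delta>" using y by (simp add: u_def field_simps)
    define pt where "pt k = x + (\<Sum>j<k. u $ ix j *\<^sub>R axis (ix j) (1::real))" for k
    have pt0: "pt 0 = x" by (simp add: pt_def)
    have "(\<Sum>j<n. u $ ix j *\<^sub>R axis (ix j) (1::real)) = (\<Sum>i\<in>UNIV. u $ i *\<^sub>R axis i (1::real))"
      using sum.reindex_bij_betw[OF ix, of "\<lambda>i. u $ i *\<^sub>R axis i (1::real)"] by (simp add: atLeast0LessThan)
    also have "\<dots> = u" using basis_expansion[of u] by (simp add: scalar_mult_eq_scaleR)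
    finally have ptn: "pt n = y" by (simp add: pt_def u_def)
    have lin: "(\<Sum>i\<in>UNIV. u $ i * dg i x) = (\<Sum>k<n. u $ ix k * dg (ix k) x)"
      using sum.reindex_bij_betw[OF ix, of "\<lambda>i. u $ i * dg i x"] by (simp add: atLeast0LessThan)
    have step: "\<bar>g (pt (Suc k)) - g (pt k) - u $ ix k * dg (ix k) x\<bar> \<le> norm u * e'" if k: "k < n" for k
    proof -
      define i where "i = ix k"
      define s where "s = u $ i"
      have ptS: "pt (Suc k) = pt k + s *\<^sub>R axis i (1::real)" by (simp add: pt_def s_def i_def)
      define \<psi> where "\<psi> \<tau> = g (pt k + \<tau> *\<^sub>R axis i (1::real))" for \<tau>
      have der: "DERIV \<psi> \<tau> :> dg i (pt k + \<tau> *\<^sub>R axis i (1::real))" for \<tau>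
      proof -
        have "((\<lambda>t. \<psi> (t + \<tau>)) has_real_derivative dg i (pt k + \<tau> *\<^sub>R axis i (1::real))) (at 0)"
          using d[of "pt k + \<tau> *\<^sub>R axis i (1::real)" i] by (simp add: \<psi>_def algebra_simps scaleR_add_left)
        then show ?thesis using DERIV_shift[of \<psi> _ 0 \<tau>] by simp
      qed
      obtain \<theta> where \<theta>: "\<bar>\<theta>\<bar> \<le> \<bar>s\<bar>" "\<psi> s - \<psi> 0 = s * dg i (pt k + \<theta> *\<^sub>R axis i (1::real))"
        using mvt_any[OF der, of s] by blast
      have "norm (pt k + \<theta> *\<^sub>R axis i (1::real) - x) \<le> norm (\<Sum>j<k. u $ ix j *\<^sub>R axis (ix j) (1::real)) + norm (\<theta> *\<^sub>R axis i (1::real))"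
      proof -
        have "pt k + \<theta> *\<^sub>R axis i (1::real) - x = (\<Sum>j<k. u $ ix j *\<^sub>R axis (ix j) (1::real)) + \<theta> *\<^sub>R axis i (1::real)"
          by (simp add: pt_def)
        then show ?thesis by (simp only:) (rule norm_triangle_ineq)
      qed
      also have "\<dots> \<le> (\<Sum>j<k. norm u) + norm u"
      proof (intro add_mono order.trans[OF norm_sum sum_mono])
        show "norm (u $ ix j *\<^sub>R axis (ix j) (1::real)) \<le> norm u" for j
          by (simp add: component_le_norm_cart)
        show "norm (\<theta> *\<^sub>R axis i (1::real)) \<le> norm u"
          using \<theta>(1) component_le_norm_cart[of u i] by (simp add: s_def)
      qed
      also have "\<dots> \<le> (real n + 1) * norm u" using k by (simp add: algebra_simps mult_right_mono)
      finally have "dist (pt k + \<theta> *\<^sub>R axis i (1::real)) x < \<delta>" using nu by (simp add: dist_norm)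
      then have cl: "\<bar>dg i (pt k + \<theta> *\<^sub>R axis i (1::real)) - dg i x\<bar> < e'" using \<delta>(2) by blast
      have "g (pt (Suc k)) - g (pt k) - u $ ix k * dg (ix k) x = s * (dg i (pt k + \<theta> *\<^sub>R axis i (1::real)) - dg i x)"
        using \<theta>(2) by (simp add: ptS \<psi>_def s_def i_def algebra_simps)
      also have "\<bar>\<dots>\<bar> \<le> norm u * e'"
        unfolding abs_mult using cl component_le_norm_cart[of u i] e'
        by (intro mult_mono) (auto simp: s_def)
      finally show ?thesis .
    qed
    have "g y - g x - (\<Sum>i\<in>UNIV. u $ i * dg i x) = (\<Sum>k<n. g (pt (Suc k)) - g (pt k) - u $ ix k * dg (ix k) x)"
      using sum_lessThan_telescope[of "\<lambda>k. g (pt k)" n] by (simp add: lin sum_subtractf pt0 ptn)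
    also have "\<bar>\<dots>\<bar> \<le> (\<Sum>k<n. norm u * e')"
      by (rule order.trans[OF sum_abs sum_mono]) (use step in auto)
    also have "\<dots> \<le> e * norm u"
    proof -
      have "(\<Sum>k<n. norm u * e') = real n * norm u * e'" by simp
      also have "\<dots> \<le> (real n + 1) * norm u * e'" using e' by (intro mult_right_mono) auto
      also have "\<dots> = e * norm u" by (simp add: e'_def)
      finally show ?thesis .
    qed
    finally show "norm (g y - g x - (\<Sum>i\<in>UNIV. (y - x) $ i * dg i x)) \<le> e * norm (y - x)"
      by (simp add: u_def)
  qed
qed

lemma has_derivative_vec:
  fixes f :: "'a::real_normed_vector \<Rightarrow> 'b::euclidean_space ^'n"
  assumes "\<And>i. ((\<lambda>x. f x $ i) has_derivative D i) (at a within S)"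
  shows "(f has_derivative (\<lambda>h. \<chi> i. D i h)) (at a within S)"
proof (rule has_derivative_componentwise_within[THEN iffD2], rule ballI)
  fix b :: "'b^'n" assume "b \<in> Basis"
  then have "b \<in> (\<Union>i. \<Union>u\<in>Basis. {axis i u})" by (simp only: Basis_vec_def)
  then obtain i u where b: "b = axis i u" "u \<in> Basis" by blast
  show "((\<lambda>x. f x \<bullet> b) has_derivative (\<lambda>h. (\<chi> i. D i h) \<bullet> b)) (at a within S)"
    unfolding b inner_axis by (rule has_derivative_eq_rhs[OF has_derivative_inner_left[OF assms[of i], of u]]) simp
qed

lemma differentiable_vec:
  fixes f :: "'a::real_normed_vector \<Rightarrow> 'b::euclidean_space ^'n"
  assumes "\<And>i. (\<lambda>x. f x $ i) differentiable (at a within S)"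
  shows "f differentiable (at a within S)"
proof -
  have "\<forall>i. \<exists>D. ((\<lambda>x. f x $ i) has_derivative D) (at a within S)"
    using assms unfolding differentiable_def by blast
  then obtain D where "\<And>i. ((\<lambda>x. f x $ i) has_derivative D i) (at a within S)" by metis
  then show ?thesis unfolding differentiable_def by (blast intro: has_derivative_vec)
qed

lemma differentiable_nth:
  assumes "f differentiable (at a within S)"
  shows "(\<lambda>x. f x $ i) differentiable (at a within S)"
proof -
  obtain D where "(f has_derivative D) (at a within S)" using assms unfolding differentiable_def by blast
  from bounded_linear.has_derivative[OF bounded_linear_vec_nth this, of i]
  show ?thesis unfolding differentiable_def by blast
qed

lemma differentiable_prod_fin:
  fixes h :: "'i \<Rightarrow> 'a::real_normed_vector \<Rightarrow> real"
  assumes "finite I" "\<And>i. i \<in> I \<Longrightarrow> h i differentiable (at a)"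
  shows "(\<lambda>x. \<Prod>i\<in>I. h i x) differentiable (at a)"
  using assms
proof (induction I rule: finite_induct)
  case empty then show ?case by simp
next
  case (insert i I)
  have "(\<lambda>x. h i x * (\<Prod>i\<in>I. h i x)) differentiable (at a)"
    using insert by (intro differentiable_mult) auto
  then show ?case using insert(1,2) by simp
qed

lemma det_differentiable:
  fixes A :: "'a::real_normed_vector \<Rightarrow> real^'n^'n"
  assumes "A differentiable (at z)"
  shows "(\<lambda>z. det (A z)) differentiable (at z)"
  unfolding det_def
proof (rule differentiable_sum)
  show "finite {p. p permutes (UNIV::'n set)}" by (simp add: finite_permutations)
  show "\<forall>p\<in>{p. p permutes UNIV}. (\<lambda>z. of_int (sign p) * (\<Prod>i\<in>UNIV. A z $ i $ p i)) differentiable (at z)"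
  proof
    fix p :: "'n \<Rightarrow> 'n"
    have "(\<lambda>z. \<Prod>i\<in>UNIV. A z $ i $ p i) differentiable (at z)"
      by (rule differentiable_prod_fin) (simp_all add: differentiable_nth assms)
    then show "(\<lambda>z. of_int (sign p) * (\<Prod>i\<in>UNIV. A z $ i $ p i)) differentiable (at z)"
      by (intro differentiable_mult differentiable_const)
  qed
qed

lemma mv_row: "((X::real^'n^'m) *v b) $ j = X $ j \<bullet> b"
  by (simp add: matrix_vector_mult_def inner_vec_def mult.commute)

lemma symmat_inner:
  fixes X :: "real^'n^'n"
  assumes "\<And>i j. X$i$j = X$j$i"
  shows "(X *v y) \<bullet> b = y \<bullet> (X *v b)"
proof -
  have "transpose X = X" using assms by (simp add: transpose_def vec_eq_iff)
  then have "X *v y = y v* X" by (metis transpose_matrix_vector)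
  then show ?thesis by (simp add: dot_lmul_matrix)
qed

lemma mv_bounded_bilinear: "bounded_bilinear (\<lambda>(X::real^'n^'m) (y::real^'n). X *v y)"
proof -
  have "bilinear (\<lambda>(X::real^'n^'m) (y::real^'n). X *v y)"
    unfolding bilinear_def
  proof (intro conjI allI)
    show "linear ((*v) X)" for X :: "real^'n^'m" by simp
    show "linear (\<lambda>X::real^'n^'m. X *v y)" for y :: "real^'n"
      by (rule linearI) (simp_all add: matrix_vector_mult_add_rdistrib flip: scaleR_matrix_vector_assoc)
  qed
  then show ?thesis by (simp add: bilinear_conv_bounded_bilinear)
qed

lemma invertible_right:
  fixes A :: "real^'n^'n"
  assumes "invertible A" shows "A ** matrix_inv A = mat 1"
  using assms unfolding invertible_def matrix_inv_def by (rule someI_ex[THEN conjunct1])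

lemma line_deriv:
  fixes g :: "real^'d \<Rightarrow> real"
  assumes "(g has_derivative L) (at x)"
  shows "((\<lambda>t. g (x + t *\<^sub>R v)) has_real_derivative L v) (at 0)"
proof -
  interpret L: bounded_linear L using assms by (rule has_derivative_bounded_linear)
  have l: "((\<lambda>t. x + t *\<^sub>R v) has_derivative (\<lambda>t. t *\<^sub>R v)) (at 0)"
    by (auto intro!: derivative_eq_intros)
  have "((\<lambda>t. g (x + t *\<^sub>R v)) has_derivative (\<lambda>t. L (t *\<^sub>R v))) (at 0)"
    using has_derivative_compose[OF l, of g L] assms by (simp add: o_def)
  then show ?thesis unfolding has_field_derivative_def
    by (rule has_derivative_eq_rhs) (auto simp: L.scaleR)
qed

lemma smooth_hess_differentiable:
  fixes F :: "real^'d \<Rightarrow> real" and f :: "real^'d \<Rightarrow> real^'d"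
    and Hess :: "real^'d \<Rightarrow> real^'d^'d"
  assumes F_smooth: "smooth_fun F"
    and f_grad: "\<And>x. (F has_derivative (\<lambda>u. f x \<bullet> u)) (at x)"
    and Hess_def: "\<And>x. (f has_derivative (\<lambda>u. Hess x *v u)) (at x)"
  shows "Hess differentiable (at q)"
proof -
  obtain S where S: "F \<in> S" "\<And>g. g \<in> S \<Longrightarrow> continuous_on UNIV g"
    "\<And>g i. g \<in> S \<Longrightarrow> \<exists>g'\<in>S. \<forall>x. ((\<lambda>t. g (x + t *\<^sub>R axis i 1)) has_real_derivative g' x) (at 0)"
    using F_smooth unfolding smooth_fun_def by metis
  have fS: "(\<lambda>x. f x $ i) \<in> S" for i
  proof -
    obtain g' where g': "g' \<in> S" "\<And>x. ((\<lambda>t. F (x + t *\<^sub>R axis i 1)) has_real_derivative g' x) (at 0)"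
      using S(3)[OF S(1), of i] by blast
    have "g' x = f x $ i" for x
      using DERIV_unique[OF g'(2)[of x] line_deriv[OF f_grad[of x], of "axis i 1"]]
      by (simp add: cart_eq_inner_axis)
    then have "g' = (\<lambda>x. f x $ i)" by auto
    then show ?thesis using g' by simp
  qed
  have HS: "(\<lambda>x. Hess x $ i $ j) \<in> S" for i j
  proof -
    obtain g' where g': "g' \<in> S" "\<And>x. ((\<lambda>t. f (x + t *\<^sub>R axis j 1) $ i) has_real_derivative g' x) (at 0)"
      using S(3)[OF fS[of i], of j] by blast
    have fi: "((\<lambda>x. f x $ i) has_derivative (\<lambda>u. (Hess x *v u) $ i)) (at x)" for x
      using bounded_linear.has_derivative[OF bounded_linear_vec_nth Hess_def[of x], of i] .
    have "g' x = Hess x $ i $ j" for x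
      using DERIV_unique[OF g'(2)[of x] line_deriv[OF fi[of x], of "axis j 1"]]
      by (simp add: matrix_vector_mult_basis column_def)
    then have "g' = (\<lambda>x. Hess x $ i $ j)" by auto
    then show ?thesis using g' by simp
  qed
  have Sdiff: "g differentiable (at q)" if g: "g \<in> S" for g
  proof -
    have "\<forall>i. \<exists>g'. g' \<in> S \<and> (\<forall>x. ((\<lambda>t. g (x + t *\<^sub>R axis i 1)) has_real_derivative g' x) (at 0))"
      using S(3)[OF g] by blast
    then obtain dg where dg: "\<And>i. dg i \<in> S"
      "\<And>i x. ((\<lambda>t. g (x + t *\<^sub>R axis i 1)) has_real_derivative dg i x) (at 0)" by metis
    show ?thesis
      using cp[of g dg q, OF dg(2) S(2)[OF dg(1)]] unfolding differentiable_def by blast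
  qed
  show ?thesis
    by (intro differentiable_vec Sdiff HS)
qed

theorem theorem3p1:
  fixes F :: "real^'d \<Rightarrow> real" and f :: "real^'d \<Rightarrow> real^'d"
    and Hess :: "real^'d \<Rightarrow> real^'d^'d" and M :: "real^'d^'d"
    and \<sigma> :: "real^'m^'d" and v h :: real and \<xi> :: "real^'m"
  assumes dm: "CARD('d) \<le> CARD('m)"
    and F_smooth: "smooth_fun F"
    and f_grad: "\<And>x. (F has_derivative (\<lambda>u. f x \<bullet> u)) (at x)"
    and Hess_def: "\<And>x. (f has_derivative (\<lambda>u. Hess x *v u)) (at x)"
    and M_sym: "transpose M = M"
    and M_pd: "\<And>x. x \<noteq> 0 \<Longrightarrow> x \<bullet> (M *v x) > 0"
    and v_pos: "v > 0"
    and rank_\<sigma>: "rank \<sigma> = CARD('d)"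
    and h_pos: "h > 0"
    and inv: "\<And>q. invertible (mat 1 + (h^2/2) *\<^sub>R (Hess q ** M))"
  shows "\<forall>z. step h v M Hess f \<sigma> \<xi> differentiable (at z) \<and>
           (\<forall>u w. dPdQ (frechet_derivative (step h v M Hess f \<sigma> \<xi>) (at z) u)
                       (frechet_derivative (step h v M Hess f \<sigma> \<xi>) (at z) w)
                  = exp (-v * h) * dPdQ u w)"
proof -
  define k where "k = h^2/2"
  define c0 where "c0 = exp (-v * h)"
  define c1 where "c1 = h * (1 + v * h/2) * exp (-v * h)"
  define c2 where "c2 = (1 + v * h/2) * exp (-v * h)"
  define c3 where "c3 = h * (1 - v * h/2) * exp (v * h)"
  define A where "A q = mat 1 + k *\<^sub>R (Hess q ** M)" for q
  define bb where "bb z = c0 *\<^sub>R fst z - c1 *\<^sub>R f (snd z) - c2 *\<^sub>R (\<sigma> *v \<xi>)" for z :: "(real^'d) \<times> (real^'d)"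
  define P1 where "P1 = step_P h v M Hess f \<sigma> \<xi>"
  have P1_eq: "P1 z = matrix_inv (A (snd z)) *v bb z" for z
    by (simp add: P1_def step_P_def Let_def A_def bb_def k_def c0_def c1_def c2_def)
  have step_eq: "step h v M Hess f \<sigma> \<xi> = (\<lambda>z. (P1 z, snd z + c3 *\<^sub>R (M *v P1 z) + k *\<^sub>R (M *v f (snd z)) + (h/2) *\<^sub>R (M *v (\<sigma> *v \<xi>))))"
    by (simp add: fun_eq_iff step_def Let_def P1_def c3_def k_def)
  have Ainv: "invertible (A q)" for q using inv by (simp add: A_def k_def)
  have AP0: "A (snd z) *v P1 z = bb z" for z
    using invertible_right[OF Ainv] by (simp add: P1_eq matrix_vector_mul_assoc)
  have Aexp: "A q *v y = y + k *\<^sub>R (Hess q *v (M *v y))" for q y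
    by (simp add: A_def matrix_vector_mult_add_rdistrib matrix_vector_mul_assoc flip: scaleR_matrix_vector_assoc)
  have AP: "(\<lambda>z. P1 z + k *\<^sub>R (Hess (snd z) *v (M *v P1 z))) = bb"
    using AP0 Aexp by (auto simp: fun_eq_iff)
  have Hd: "Hess differentiable (at q)" for q
    by (rule smooth_hess_differentiable[OF F_smooth f_grad Hess_def])
  define DH where "DH q = frechet_derivative Hess (at q)" for q
  have HD: "(Hess has_derivative DH q) (at q)" for q
    using Hd frechet_derivative_works DH_def by metis
  have HS: "(Hess q *v a) \<bullet> b = (Hess q *v b) \<bullet> a" for q a b
    by (rule deriv_sym[OF f_grad Hess_def])
  have Hent: "Hess q $ i $ j = Hess q $ j $ i" for q i j
    using HS[of q "axis j 1" "axis i 1"]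
    by (simp add: matrix_vector_mult_basis column_def flip: cart_eq_inner_axis)
  have HSi: "(Hess q *v a) \<bullet> b = a \<bullet> (Hess q *v b)" for q a b
    by (rule symmat_inner) (rule Hent)
  have DHent: "DH q a $ i $ j = DH q a $ j $ i" for q a i j
  proof -
    have dd: "((\<lambda>x. Hess x $ i' $ j') has_derivative (\<lambda>a. DH q a $ i' $ j')) (at q)" for i' j'
    proof -
      have "((\<lambda>x. Hess x $ i') has_derivative (\<lambda>a. DH q a $ i')) (at q)"
        by (rule bounded_linear.has_derivative[OF bounded_linear_vec_nth HD])
      then show ?thesis by (rule bounded_linear.has_derivative[OF bounded_linear_vec_nth])
    qed
    have "(\<lambda>x. Hess x $ i $ j) = (\<lambda>x. Hess x $ j $ i)" using Hent by auto
    then have "(\<lambda>a. DH q a $ i $ j) = (\<lambda>a. DH q a $ j $ i)"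
      using has_derivative_unique[OF dd[of i j]] dd[of j i] by metis
    then show ?thesis by metis
  qed
  have schwarz: "DH q a $ j \<bullet> b = DH q b $ j \<bullet> a" for q a b j
  proof -
    have g: "((\<lambda>x. f x $ j) has_derivative (\<lambda>u. Hess y $ j \<bullet> u)) (at y)" for y
      using bounded_linear.has_derivative[OF bounded_linear_vec_nth Hess_def[of y], of j] by (simp add: mv_row)
    have G: "((\<lambda>x. Hess x $ j) has_derivative (\<lambda>a. DH q a $ j)) (at q)"
      by (rule bounded_linear.has_derivative[OF bounded_linear_vec_nth HD])
    from deriv_sym[OF g G] show ?thesis .
  qed
  have DHS: "(DH q a *v y) \<bullet> b = (DH q b *v y) \<bullet> a" for q a b y
  proof -
    have "(DH q a *v y) \<bullet> b = y \<bullet> (DH q a *v b)" by (rule symmat_inner) (rule DHent)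
    also have "DH q a *v b = DH q b *v a" by (simp add: vec_eq_iff mv_row schwarz)
    also have "y \<bullet> (DH q b *v a) = (DH q b *v y) \<bullet> a" by (rule symmat_inner[symmetric]) (rule DHent)
    finally show ?thesis .
  qed
  have Ment: "M $ i $ j = M $ j $ i" for i j
  proof -
    have "transpose M $ i $ j = M $ j $ i" by (simp add: transpose_def)
    then show ?thesis using M_sym by simp
  qed
  have MS: "(M *v a) \<bullet> b = a \<bullet> (M *v b)" for a b
    by (rule symmat_inner) (rule Ment)
  have Hs_d: "(\<lambda>z. Hess (snd z)) differentiable (at z)" for z :: "(real^'d) \<times> (real^'d)"
    by (rule differentiable_compose[OF Hd]) (simp add: bounded_linear_snd bounded_linear_imp_differentiable)
  have Aent_d: "(\<lambda>z. A (snd z) $ i $ l) differentiable (at z)" for i l and z :: "(real^'d) \<times> (real^'d)"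
  proof -
    have e: "(\<lambda>z. A (snd z) $ i $ l) = (\<lambda>z. mat 1 $ i $ l + k * (\<Sum>m\<in>UNIV. Hess (snd z) $ i $ m * M $ m $ l))"
      by (simp add: A_def matrix_matrix_mult_def fun_eq_iff)
    show ?thesis unfolding e
      by (intro differentiable_add differentiable_const differentiable_mult differentiable_sum ballI finite
          differentiable_nth Hs_d)
  qed
  have fd: "f differentiable (at q)" for q using Hess_def unfolding differentiable_def by blast
  have fs_d: "(\<lambda>z. f (snd z)) differentiable (at z)" for z :: "(real^'d) \<times> (real^'d)"
    by (rule differentiable_compose[OF fd]) (simp add: bounded_linear_snd bounded_linear_imp_differentiable)
  have bb_d: "bb differentiable (at z)" for z
    unfolding bb_def[abs_def]
    by (intro differentiable_diff differentiable_scaleR differentiable_const fs_d)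
      (simp add: bounded_linear_fst bounded_linear_imp_differentiable)
  have P1_cr: "P1 = (\<lambda>z. \<chi> j. det (\<chi> i l. if l = j then bb z $ i else A (snd z) $ i $ l) / det (A (snd z)))"
  proof (rule ext)
    fix z :: "(real^'d) \<times> (real^'d)"
    have "det (A (snd z)) \<noteq> 0" using Ainv invertible_det_nz by blast
    then show "P1 z = (\<chi> j. det (\<chi> i l. if l = j then bb z $ i else A (snd z) $ i $ l) / det (A (snd z)))"
      using cramer AP0[of z] by blast
  qed
  have P1_d: "P1 differentiable (at z)" for z
  proof -
    have C_d: "(\<lambda>z. (\<chi> i l. if l = j then bb z $ i else A (snd z) $ i $ l) :: real^'d^'d) differentiable (at z)" for j
    proof (intro differentiable_vec)
      fix i l
      show "(\<lambda>z. (\<chi> i l. if l = j then bb z $ i else A (snd z) $ i $ l) $ i $ l) differentiable (at z)"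
        by (cases "l = j") (simp_all add: differentiable_nth bb_d Aent_d)
    qed
    have A_d: "(\<lambda>z. A (snd z)) differentiable (at z)"
      by (intro differentiable_vec Aent_d)
    have "det (A (snd z)) \<noteq> 0" using Ainv invertible_det_nz by blast
    then show ?thesis unfolding P1_cr
      by (intro differentiable_vec) (simp add: differentiable_divide det_differentiable C_d A_d)
  qed
  show ?thesis
  proof (rule allI, rule conjI)
    fix z :: "(real^'d) \<times> (real^'d)"
    define H where "H = Hess (snd z)"
    define y where "y = M *v P1 z"
    define DP where "DP = frechet_derivative P1 (at z)"
    have PD: "(P1 has_derivative DP) (at z)" using P1_d frechet_derivative_works DP_def by metis
    have sndD: "(snd has_derivative snd) (at z)"
      using has_derivative_snd[OF has_derivative_ident, of "at z"] by simp
    have fstD: "(fst has_derivative fst) (at z)"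
      using has_derivative_fst[OF has_derivative_ident, of "at z"] by simp
    have fsD: "((\<lambda>z. f (snd z)) has_derivative (\<lambda>u. H *v snd u)) (at z)"
      using has_derivative_compose[OF sndD Hess_def] by (simp add: H_def)
    have HsD: "((\<lambda>z. Hess (snd z)) has_derivative (\<lambda>u. DH (snd z) (snd u))) (at z)"
      using has_derivative_compose[OF sndD HD] .
    have MPD: "((\<lambda>z. M *v P1 z) has_derivative (\<lambda>u. M *v DP u)) (at z)"
      by (rule bounded_linear.has_derivative[OF matrix_vector_mul_bounded_linear PD])
    have BD: "((\<lambda>x. Hess (snd x) *v (M *v P1 x)) has_derivative (\<lambda>u. H *v (M *v DP u) + DH (snd z) (snd u) *v y)) (at z)"
      using bounded_bilinear.FDERIV[OF mv_bounded_bilinear HsD MPD] by (simp add: H_def y_def)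
    have LD: "((\<lambda>z. P1 z + k *\<^sub>R (Hess (snd z) *v (M *v P1 z))) has_derivative
        (\<lambda>u. DP u + k *\<^sub>R (H *v (M *v DP u) + DH (snd z) (snd u) *v y))) (at z)"
      by (intro has_derivative_add PD has_derivative_scaleR_right BD)
    have bD: "(bb has_derivative (\<lambda>u. c0 *\<^sub>R fst u - c1 *\<^sub>R (H *v snd u) - 0)) (at z)"
      unfolding bb_def[abs_def]
      by (intro has_derivative_diff has_derivative_scaleR_right fstD fsD has_derivative_const)
    have E: "DP a + k *\<^sub>R (H *v (M *v DP a) + DH (snd z) (snd a) *v y) = c0 *\<^sub>R fst a - c1 *\<^sub>R (H *v snd a)" for a
    proof -
      have "(\<lambda>u. DP u + k *\<^sub>R (H *v (M *v DP u) + DH (snd z) (snd u) *v y)) = (\<lambda>u. c0 *\<^sub>R fst u - c1 *\<^sub>R (H *v snd u) - 0)"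
        using has_derivative_unique[OF LD[unfolded AP] bD] .
      from fun_cong[OF this, of a] show ?thesis by simp
    qed
    define DS where "DS u = (DP u, snd u + c3 *\<^sub>R (M *v DP u) + k *\<^sub>R (M *v (H *v snd u)))" for u
    have SD: "(step h v M Hess f \<sigma> \<xi> has_derivative DS) (at z)"
    proof -
      have "((\<lambda>z. snd z + c3 *\<^sub>R (M *v P1 z) + k *\<^sub>R (M *v f (snd z)) + (h/2) *\<^sub>R (M *v (\<sigma> *v \<xi>)))
          has_derivative (\<lambda>u. snd u + c3 *\<^sub>R (M *v DP u) + k *\<^sub>R (M *v (H *v snd u)) + 0)) (at z)"
        by (intro has_derivative_add sndD has_derivative_scaleR_right MPD has_derivative_const
            bounded_linear.has_derivative[OF matrix_vector_mul_bounded_linear fsD])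
      then show ?thesis unfolding step_eq DS_def
        by (intro has_derivative_Pair PD) simp
    qed
    show "step h v M Hess f \<sigma> \<xi> differentiable (at z)" using SD differentiable_def by blast
    have FD: "frechet_derivative (step h v M Hess f \<sigma> \<xi>) (at z) = DS"
      using SD frechet_derivative_at by metis
    have fDS: "fst (DS a) = DP a" for a by (simp add: DS_def)
    have e1: "DP a \<bullet> snd (DS b) = (c0 *\<^sub>R fst a - c1 *\<^sub>R (H *v snd a) - k *\<^sub>R (DH (snd z) (snd a) *v y)) \<bullet> snd b
        + c3 * (DP a \<bullet> (M *v DP b))" for a b
    proof -
      have m: "DP a \<bullet> (M *v (H *v snd b)) = (H *v (M *v DP a)) \<bullet> snd b"
      proof -
        have "DP a \<bullet> (M *v (H *v snd b)) = (M *v DP a) \<bullet> (H *v snd b)" by (rule MS[symmetric])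
        also have "\<dots> = (H *v (M *v DP a)) \<bullet> snd b" by (simp add: H_def HSi)
        finally show ?thesis .
      qed
      have r: "c0 *\<^sub>R fst a - c1 *\<^sub>R (H *v snd a) - k *\<^sub>R (DH (snd z) (snd a) *v y) = DP a + k *\<^sub>R (H *v (M *v DP a))"
        using E[of a] by (simp add: algebra_simps)
      show ?thesis unfolding r
        by (simp add: DS_def inner_add_right inner_add_left m)
    qed
    show "\<forall>u w. dPdQ (frechet_derivative (step h v M Hess f \<sigma> \<xi>) (at z) u)
                       (frechet_derivative (step h v M Hess f \<sigma> \<xi>) (at z) w)
                  = exp (-v * h) * dPdQ u w"
    proof (intro allI)
      fix u w :: "(real^'d) \<times> (real^'d)"
      have s1: "(H *v snd u) \<bullet> snd w = (H *v snd w) \<bullet> snd u" by (simp add: H_def HS)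
      have s2: "(DH (snd z) (snd u) *v y) \<bullet> snd w = (DH (snd z) (snd w) *v y) \<bullet> snd u" by (rule DHS)
      have s3: "DP u \<bullet> (M *v DP w) = DP w \<bullet> (M *v DP u)" by (metis MS inner_commute)
      show "dPdQ (frechet_derivative (step h v M Hess f \<sigma> \<xi>) (at z) u)
                 (frechet_derivative (step h v M Hess f \<sigma> \<xi>) (at z) w) = exp (-v * h) * dPdQ u w"
        unfolding FD dPdQ_def fDS e1
        by (simp add: inner_diff_left s1 s2 s3 c0_def algebra_simps)
    qed
  qed
qed

end
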